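(* Let $\phi:X\to Y$ be a morphism of $\mathrm{Agg}^{\rm ctd}$. Then the automorphism group of $\phi$ in the arrow category, i.e. the group of pairs $(\alpha,\beta)\in\mathrm{Aut}(X)\times\mathrm{Aut}(Y)$ with $\beta\circ\phi=\phi\circ\alpha$, is isomorphic to the automorphism group (in $\mathrm{Gr}$) of the ghost graph $\mathbb{\Gamma}(\phi)$.
   Context: A graph $\Gamma=(F,V,\partial,\imath)$ consists of finite sets $F$ (flags) and $V$ (vertices), a map $\partial:F\to V$ and an involution $\imath$ of $F$. The two-element orbits of $\imath$ are the edges, the fixed points the outer flags. A graph morphism $\phi:\Gamma\to\Gamma'=(F',V',\partial',\imath')$ is a triple $(\phi_V,\phi^F,\imath_\phi)$ with $\phi_V:V\to V'$ surjective, $\phi^F:F'\to F$ injective and $\imath_\phi$ a fixed-point-free involution of $F\setminus\phi^F(F')$, such that: (i) $\phi_V\partial\phi^F=\partial'$ and $\phi_V\partial(f)=\phi_V\partial(\imath_\phi f)$ for $f\notin\phi^F(F')$; (ii) for $f\notin\phi^F(F')$, either $\{f,\imath f\}$ is an edge of $\Gamma$ and $\imath_\phi f=\imath f$, or $f$ and $\imath_\phi f$ are both outer flags of $\Gamma$; (iii) if $f'\in F'$ and $\phi^F(f')$ lies on an edge of $\Gamma$, then $\imath(\phi^F f')=\phi^F(\imath' f')$. Composition: $(\psi\phi)_V=\psi_V\phi_V$, $(\psi\phi)^F=\phi^F\psi^F$, $\imath_{\psi\phi}$ equals $\imath_\phi$ off $\phi^F(F')$ and $\phi^F\imath_\psi(\phi^F)^{-1}$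 on $\phi^F(F'\setminus\psi^F(F''))$; this is the category $\mathrm{Gr}$. Isomorphisms: $\phi_V,\phi^F$ bijective. The ghost graph of $\phi$ is $\mathbb{\Gamma}(\phi)=(F,V,\partial,\hat\imath_\phi)$, $\hat\imath_\phi$ extending $\imath_\phi$ by the identity on $\phi^F(F')$. An aggregate is a graph with $\imath=\mathrm{id}$. For distinct outer flags $s,t$ of an aggregate, the virtual edge contraction ${}_s\circ_t$ ($\partial s\neq\partial t$) resp. virtual loop contraction $\circ_{st}$ ($\partial s=\partial t$) is the morphism $(\text{quotient } V\to V/(\partial s\sim\partial t),\ \text{inclusion } F\setminus\{s,t\}\hookrightarrow F,\ \imath_\phi(s)=t)$. $\mathrm{Agg}^{\rm ctd}$ is the category of aggregates whose morphisms are generated by isomorphisms and virtual edge and loop contractions. *)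

theory Defs
  imports "HOL-Algebra.Group" "HOL-Library.FuncSet"
begin

text \<open>Graphs (F, V, boundary, involution). All graphs considered in one statement
live in a common flag type 'f and vertex type 'v. Functions are only meaningful on
the flags/vertices.\<close>

record ('f, 'v) gph =
  gF :: "'f set"
  gV :: "'v set"
  gbd :: "'f \<Rightarrow> 'v"
  ginv :: "'f \<Rightarrow> 'f"

definition is_graph :: "('f, 'v) gph \<Rightarrow> bool" where
  "is_graph G \<longleftrightarrow> finite (gF G) \<and> finite (gV G) \<and>
     (\<forall>f\<in>gF G. gbd G f \<in> gV G) \<and>
     (\<forall>f\<in>gF G. ginv G f \<in> gF G \<and> ginv G (ginv G f) = f)"

text \<open>A morphism phi : G -> G' is a triple (phi_V, phi^F, i_phi) with
phi_V : V -> V', phi^F : F' -> F and i_phi an involution on F - phi^F(F').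
The maps are taken extensional (value undefined outside their domains), so that
morphisms are equal iff they agree as triples of partial maps.\<close>

record ('f, 'v) gmor =
  mV :: "'v \<Rightarrow> 'v"
  mF :: "'f \<Rightarrow> 'f"
  mI :: "'f \<Rightarrow> 'f"

definition is_mor :: "('f, 'v) gph \<Rightarrow> ('f, 'v) gph \<Rightarrow> ('f, 'v) gmor \<Rightarrow> bool" where
  "is_mor G G' \<phi> \<longleftrightarrow>
     is_graph G \<and> is_graph G' \<and>
     mV \<phi> \<in> extensional (gV G) \<and>
     mF \<phi> \<in> extensional (gF G') \<and>
     mI \<phi> \<in> extensional (gF G - mF \<phi> ` gF G') \<and>
     mV \<phi> ` gV G = gV G' \<and>
     mF \<phi> ` gF G' \<subseteq> gF G \<and> inj_on (mF \<phi>) (gF G') \<and>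
     (\<forall>f \<in> gF G - mF \<phi> ` gF G'.
        mI \<phi> f \<in> gF G - mF \<phi> ` gF G' \<and> mI \<phi> (mI \<phi> f) = f \<and> mI \<phi> f \<noteq> f) \<and>
     (\<forall>f' \<in> gF G'. mV \<phi> (gbd G (mF \<phi> f')) = gbd G' f') \<and>
     (\<forall>f \<in> gF G - mF \<phi> ` gF G'. mV \<phi> (gbd G f) = mV \<phi> (gbd G (mI \<phi> f))) \<and>
     (\<forall>f \<in> gF G - mF \<phi> ` gF G'.
        (ginv G f \<noteq> f \<and> mI \<phi> f = ginv G f) \<or>
        (ginv G f = f \<and> ginv G (mI \<phi> f) = mI \<phi> f)) \<and>
     (\<forall>f' \<in> gF G'. ginv G (mF \<phi> f') \<noteq> mF \<phi> f' \<longrightarrow>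
        ginv G (mF \<phi> f') = mF \<phi> (ginv G' f'))"

definition mor_comp :: "('f, 'v) gph \<Rightarrow> ('f, 'v) gph \<Rightarrow> ('f, 'v) gph \<Rightarrow>
    ('f, 'v) gmor \<Rightarrow> ('f, 'v) gmor \<Rightarrow> ('f, 'v) gmor" where
  "mor_comp G G' G'' \<psi> \<phi> =
     \<lparr> mV = restrict (\<lambda>v. mV \<psi> (mV \<phi> v)) (gV G),
       mF = restrict (\<lambda>f. mF \<phi> (mF \<psi> f)) (gF G''),
       mI = restrict (\<lambda>f. if f \<notin> mF \<phi> ` gF G' then mI \<phi> f
                          else mF \<phi> (mI \<psi> (the_inv_into (gF G') (mF \<phi>) f)))
              (gF G - mF \<phi> ` (mF \<psi> ` gF G'')) \<rparr>"

definition mor_id :: "('f, 'v) gph \<Rightarrow> ('f, 'v) gmor" where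
  "mor_id G = \<lparr> mV = restrict id (gV G), mF = restrict id (gF G), mI = (\<lambda>_. undefined) \<rparr>"

definition is_iso_mor :: "('f, 'v) gph \<Rightarrow> ('f, 'v) gph \<Rightarrow> ('f, 'v) gmor \<Rightarrow> bool" where
  "is_iso_mor G G' \<phi> \<longleftrightarrow> is_mor G G' \<phi> \<and>
     bij_betw (mV \<phi>) (gV G) (gV G') \<and> bij_betw (mF \<phi>) (gF G') (gF G)"

definition ghost :: "('f, 'v) gph \<Rightarrow> ('f, 'v) gph \<Rightarrow> ('f, 'v) gmor \<Rightarrow> ('f, 'v) gph" where
  "ghost G G' \<phi> = \<lparr> gF = gF G, gV = gV G, gbd = gbd G,
     ginv = (\<lambda>f. if f \<in> mF \<phi> ` gF G' then f else mI \<phi> f) \<rparr>"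

definition is_aggregate :: "('f, 'v) gph \<Rightarrow> bool" where
  "is_aggregate G \<longleftrightarrow> is_graph G \<and> (\<forall>f\<in>gF G. ginv G f = f)"

text \<open>The quotient
V/(bd s ~ bd t) is represented by V with bd t identified to bd s (a canonical
representative; Agg^ctd is closed under isomorphisms anyway).\<close>
definition contr_vmap :: "('f, 'v) gph \<Rightarrow> 'f \<Rightarrow> 'f \<Rightarrow> 'v \<Rightarrow> 'v" where
  "contr_vmap G s t = (\<lambda>v. if v = gbd G t then gbd G s else v)"

definition contr_target :: "('f, 'v) gph \<Rightarrow> 'f \<Rightarrow> 'f \<Rightarrow> ('f, 'v) gph" where
  "contr_target G s t = \<lparr> gF = gF G - {s, t}, gV = contr_vmap G s t ` gV G,
     gbd = (\<lambda>f. contr_vmap G s t (gbd G f)), ginv = id \<rparr>"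

definition contr_mor :: "('f, 'v) gph \<Rightarrow> 'f \<Rightarrow> 'f \<Rightarrow> ('f, 'v) gmor" where
  "contr_mor G s t = \<lparr> mV = restrict (contr_vmap G s t) (gV G),
     mF = restrict id (gF G - {s, t}),
     mI = restrict (\<lambda>f. if f = s then t else s) {s, t} \<rparr>"

inductive ctd_mor :: "('f, 'v) gph \<Rightarrow> ('f, 'v) gph \<Rightarrow> ('f, 'v) gmor \<Rightarrow> bool" where
  iso: "is_aggregate X \<Longrightarrow> is_aggregate Y \<Longrightarrow> is_iso_mor X Y \<phi> \<Longrightarrow> ctd_mor X Y \<phi>"
| contr: "is_aggregate X \<Longrightarrow> s \<in> gF X \<Longrightarrow> t \<in> gF X \<Longrightarrow> s \<noteq> t \<Longrightarrow>
          ctd_mor X (contr_target X s t) (contr_mor X s t)"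
| comp: "ctd_mor X Y \<phi> \<Longrightarrow> ctd_mor Y Z \<psi> \<Longrightarrow> ctd_mor X Z (mor_comp X Y Z \<psi> \<phi>)"

definition aut_group :: "('f, 'v) gph \<Rightarrow> ('f, 'v) gmor monoid" where
  "aut_group G = \<lparr> carrier = {\<alpha>. is_iso_mor G G \<alpha>},
     mult = (\<lambda>\<alpha> \<beta>. mor_comp G G G \<alpha> \<beta>), one = mor_id G \<rparr>"

definition arrow_aut_group :: "('f, 'v) gph \<Rightarrow> ('f, 'v) gph \<Rightarrow> ('f, 'v) gmor
    \<Rightarrow> (('f, 'v) gmor \<times> ('f, 'v) gmor) monoid" where
  "arrow_aut_group X Y \<phi> = \<lparr> carrier = {(\<alpha>, \<beta>). is_iso_mor X X \<alpha> \<and> is_iso_mor Y Y \<beta> \<and>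
        mor_comp X Y Y \<beta> \<phi> = mor_comp X X Y \<phi> \<alpha>},
     mult = (\<lambda>(\<alpha>, \<beta>) (\<alpha>', \<beta>'). (mor_comp X X X \<alpha> \<alpha>', mor_comp Y Y Y \<beta> \<beta>')),
     one = (mor_id X, mor_id Y) \<rparr>"

end

theory Submission
  imports Defs
begin

lemma is_morD:
  assumes "is_mor G G' \<phi>"
  shows "is_graph G" "is_graph G'" "mV \<phi> \<in> extensional (gV G)"
    "mF \<phi> \<in> extensional (gF G')" "mI \<phi> \<in> extensional (gF G - mF \<phi> ` gF G')"
    "mV \<phi> ` gV G = gV G'" "mF \<phi> ` gF G' \<subseteq> gF G" "inj_on (mF \<phi>) (gF G')"
    "\<And>f. f \<in> gF G - mF \<phi> ` gF G' \<Longrightarrow> mI \<phi> f \<in> gF G - mF \<phi> ` gF G'"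
    "\<And>f. f \<in> gF G - mF \<phi> ` gF G' \<Longrightarrow> mI \<phi> (mI \<phi> f) = f"
    "\<And>f. f \<in> gF G - mF \<phi> ` gF G' \<Longrightarrow> mI \<phi> f \<noteq> f"
    "\<And>f'. f' \<in> gF G' \<Longrightarrow> mV \<phi> (gbd G (mF \<phi> f')) = gbd G' f'"
    "\<And>f. f \<in> gF G - mF \<phi> ` gF G' \<Longrightarrow> mV \<phi> (gbd G f) = mV \<phi> (gbd G (mI \<phi> f))"
  using assms unfolding is_mor_def by blast+

lemma is_mor_aggI:
  assumes "is_aggregate G" "is_aggregate G'" "mV \<phi> \<in> extensional (gV G)"
    "mF \<phi> \<in> extensional (gF G')" "mI \<phi> \<in> extensional (gF G - mF \<phi> ` gF G')"
    "mV \<phi> ` gV G = gV G'" "mF \<phi> ` gF G' \<subseteq> gF G" "inj_on (mF \<phi>) (gF G')"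
    "\<And>f. f \<in> gF G - mF \<phi> ` gF G' \<Longrightarrow> mI \<phi> f \<in> gF G - mF \<phi> ` gF G'"
    "\<And>f. f \<in> gF G - mF \<phi> ` gF G' \<Longrightarrow> mI \<phi> (mI \<phi> f) = f"
    "\<And>f. f \<in> gF G - mF \<phi> ` gF G' \<Longrightarrow> mI \<phi> f \<noteq> f"
    "\<And>f'. f' \<in> gF G' \<Longrightarrow> mV \<phi> (gbd G (mF \<phi> f')) = gbd G' f'"
    "\<And>f. f \<in> gF G - mF \<phi> ` gF G' \<Longrightarrow> mV \<phi> (gbd G f) = mV \<phi> (gbd G (mI \<phi> f))"
  shows "is_mor G G' \<phi>"
proof -
  have a: "\<And>f. f \<in> gF G \<Longrightarrow> ginv G f = f" using assms(1) by (simp add: is_aggregate_def)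
  have b: "\<And>f. f \<in> gF G - mF \<phi> ` gF G' \<Longrightarrow> ginv G (mI \<phi> f) = mI \<phi> f"
    using a assms(9) by blast
  have c: "\<And>f'. f' \<in> gF G' \<Longrightarrow> ginv G (mF \<phi> f') = mF \<phi> f'" using a assms(7) by blast
  have g: "is_graph G" "is_graph G'" using assms(1,2) by (simp_all add: is_aggregate_def)
  show ?thesis unfolding is_mor_def
    apply (intro conjI)
                 apply (rule g(1))
                apply (rule g(2))
               apply (rule assms(3))
              apply (rule assms(4))
             apply (rule assms(5))
            apply (rule assms(6))
           apply (rule assms(7))
          apply (rule assms(8))
    subgoal using assms(9,10,11) by blast
    subgoal using assms(12) by blast
    subgoal using assms(13) by blast
    subgoal by (intro ballI disjI2 conjI) (simp_all add: a b)
    subgoal by (simp add: c)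
    done
qed

definition Rel :: "('f, 'v) gph \<Rightarrow> ('f, 'v) gph \<Rightarrow> ('f, 'v) gmor \<Rightarrow> ('v \<times> 'v) set" where
  "Rel X Y \<phi> = {(gbd X f, gbd X (mI \<phi> f)) | f. f \<in> gF X - mF \<phi> ` gF Y}"

definition good :: "('f, 'v) gph \<Rightarrow> ('f, 'v) gph \<Rightarrow> ('f, 'v) gmor \<Rightarrow> bool" where
  "good X Y \<phi> \<longleftrightarrow> is_aggregate X \<and> is_aggregate Y \<and> is_mor X Y \<phi> \<and>
     (\<forall>v\<in>gV X. \<forall>w\<in>gV X. mV \<phi> v = mV \<phi> w \<longrightarrow> (v, w) \<in> (Rel X Y \<phi>)\<^sup>*)"

lemma good_iso:
  assumes "is_aggregate X" "is_aggregate Y" "is_iso_mor X Y \<phi>"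
  shows "good X Y \<phi>"
  using assms unfolding good_def is_iso_mor_def bij_betw_def inj_on_def by auto

lemma good_contr:
  assumes X: "is_aggregate X" and st: "s \<in> gF X" "t \<in> gF X" "s \<noteq> t"
  shows "good X (contr_target X s t) (contr_mor X s t)"
proof -
  let ?T = "contr_target X s t" and ?c = "contr_mor X s t" and ?cv = "contr_vmap X s t"
  have gX: "is_graph X" using X by (simp add: is_aggregate_def)
  have img: "mF ?c ` gF ?T = gF X - {s, t}"
    by (auto simp: contr_mor_def contr_target_def)
  have C: "gF X - mF ?c ` gF ?T = {s, t}" using img st by auto
  have T: "is_aggregate ?T" using gX
    by (auto simp: is_aggregate_def is_graph_def contr_target_def)
  have vs: "?cv (gbd X s) = gbd X s" "?cv (gbd X t) = gbd X s"
    by (auto simp: contr_vmap_def)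
  have bdV: "\<And>f. f \<in> gF X \<Longrightarrow> gbd X f \<in> gV X" using gX by (simp add: is_graph_def)
  have mor: "is_mor X ?T ?c"
  proof (rule is_mor_aggI[OF X T])
    show "mV ?c \<in> extensional (gV X)" by (simp add: contr_mor_def)
    show "mF ?c \<in> extensional (gF ?T)" by (simp add: contr_mor_def contr_target_def)
    show "mI ?c \<in> extensional (gF X - mF ?c ` gF ?T)" unfolding C by (simp add: contr_mor_def)
    show "mV ?c ` gV X = gV ?T" by (simp add: contr_mor_def contr_target_def)
    show "mF ?c ` gF ?T \<subseteq> gF X" using img by auto
    show "inj_on (mF ?c) (gF ?T)" by (simp add: contr_mor_def contr_target_def inj_on_def)
    show "\<And>f. f \<in> gF X - mF ?c ` gF ?T \<Longrightarrow> mI ?c f \<in> gF X - mF ?c ` gF ?T"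
      unfolding C by (auto simp: contr_mor_def)
    show "\<And>f. f \<in> gF X - mF ?c ` gF ?T \<Longrightarrow> mI ?c (mI ?c f) = f"
      unfolding C using st by (auto simp: contr_mor_def)
    show "\<And>f. f \<in> gF X - mF ?c ` gF ?T \<Longrightarrow> mI ?c f \<noteq> f"
      unfolding C using st by (auto simp: contr_mor_def)
    show "\<And>f'. f' \<in> gF ?T \<Longrightarrow> mV ?c (gbd X (mF ?c f')) = gbd ?T f'"
      using bdV by (auto simp: contr_mor_def contr_target_def)
    show "\<And>f. f \<in> gF X - mF ?c ` gF ?T \<Longrightarrow> mV ?c (gbd X f) = mV ?c (gbd X (mI ?c f))"
      unfolding C using st bdV vs by (auto simp: contr_mor_def)
  qed
  have r1: "(gbd X t, gbd X s) \<in> Rel X ?T ?c"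
    unfolding Rel_def C using st by (force simp: contr_mor_def)
  have r2: "(gbd X s, gbd X t) \<in> Rel X ?T ?c"
    unfolding Rel_def C using st by (force simp: contr_mor_def)
  have "\<forall>v\<in>gV X. \<forall>w\<in>gV X. mV ?c v = mV ?c w \<longrightarrow> (v, w) \<in> (Rel X ?T ?c)\<^sup>*"
  proof (intro ballI impI)
    fix v w assume v: "v \<in> gV X" and w: "w \<in> gV X" and e: "mV ?c v = mV ?c w"
    then have e': "?cv v = ?cv w" by (simp add: contr_mor_def)
    show "(v, w) \<in> (Rel X ?T ?c)\<^sup>*"
    proof (cases "v = w")
      case False
      then have "(v = gbd X t \<and> w = gbd X s) \<or> (v = gbd X s \<and> w = gbd X t)"
        using e' by (auto simp: contr_vmap_def split: if_splits)
      then show ?thesis using r1 r2 by auto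
    qed simp
  qed
  then show ?thesis using X T mor by (simp add: good_def)
qed



lemma good_comp:
  assumes gp: "good X Y \<phi>" and gq: "good Y Z \<psi>"
  shows "good X Z (mor_comp X Y Z \<psi> \<phi>)"
proof -
  let ?c = "mor_comp X Y Z \<psi> \<phi>"
  have aX: "is_aggregate X" and aY: "is_aggregate Y" and mp: "is_mor X Y \<phi>"
    and fibp: "\<And>v w. v \<in> gV X \<Longrightarrow> w \<in> gV X \<Longrightarrow> mV \<phi> v = mV \<phi> w \<Longrightarrow> (v, w) \<in> (Rel X Y \<phi>)\<^sup>*"
    using gp by (auto simp: good_def)
  have aZ: "is_aggregate Z" and mq: "is_mor Y Z \<psi>"
    and fibq: "\<And>v w. v \<in> gV Y \<Longrightarrow> w \<in> gV Y \<Longrightarrow> mV \<psi> v = mV \<psi> w \<Longrightarrow> (v, w) \<in> (Rel Y Z \<psi>)\<^sup>*"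
    using gq by (auto simp: good_def)
  note P = is_morD[OF mp] and Q = is_morD[OF mq]
  have gX: "is_graph X" using aX by (simp add: is_aggregate_def)
  have bdX: "\<And>f. f \<in> gF X \<Longrightarrow> gbd X f \<in> gV X" using gX by (simp add: is_graph_def)
  have cV: "mV ?c = restrict (\<lambda>v. mV \<psi> (mV \<phi> v)) (gV X)" by (simp add: mor_comp_def)
  have cF: "mF ?c = restrict (\<lambda>f. mF \<phi> (mF \<psi> f)) (gF Z)" by (simp add: mor_comp_def)
  have cI: "mI ?c = restrict (\<lambda>f. if f \<notin> mF \<phi> ` gF Y then mI \<phi> f
                          else mF \<phi> (mI \<psi> (the_inv_into (gF Y) (mF \<phi>) f)))
              (gF X - mF \<phi> ` (mF \<psi> ` gF Z))" by (simp add: mor_comp_def)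
  have img: "mF ?c ` gF Z = mF \<phi> ` mF \<psi> ` gF Z" unfolding cF by auto
  define D where "D = gF X - mF \<phi> ` (mF \<psi> ` gF Z)"
  have Dc: "gF X - mF ?c ` gF Z = D" unfolding img D_def ..
  have sub: "gF X - mF \<phi> ` gF Y \<subseteq> D" unfolding D_def using Q(7) by blast
  have I1: "\<And>f. f \<in> gF X - mF \<phi> ` gF Y \<Longrightarrow> mI ?c f = mI \<phi> f"
    using sub unfolding cI D_def by auto
  have I2: "\<And>g. g \<in> gF Y - mF \<psi> ` gF Z \<Longrightarrow> mI ?c (mF \<phi> g) = mF \<phi> (mI \<psi> g)"
  proof -
    fix g assume g: "g \<in> gF Y - mF \<psi> ` gF Z"
    have "mF \<phi> g \<in> D"
      using g P(7,8) Q(7) unfolding D_def inj_on_def by blast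
    moreover have "the_inv_into (gF Y) (mF \<phi>) (mF \<phi> g) = g"
      using g P(8) the_inv_into_f_f by fastforce
    ultimately show "mI ?c (mF \<phi> g) = mF \<phi> (mI \<psi> g)" using g unfolding cI D_def by auto
  qed
  have Dimg: "\<And>g. g \<in> gF Y - mF \<psi> ` gF Z \<Longrightarrow> mF \<phi> g \<in> D"
    using P(7,8) Q(7) unfolding D_def inj_on_def by blast
  have Dcases: "\<And>f. f \<in> D \<Longrightarrow> f \<in> gF X - mF \<phi> ` gF Y \<or> (\<exists>g\<in>gF Y - mF \<psi> ` gF Z. f = mF \<phi> g)"
    unfolding D_def by blast
  have mc: "is_mor X Z ?c"
  proof (rule is_mor_aggI[OF aX aZ])
    show "mV ?c \<in> extensional (gV X)" unfolding cV by simp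
    show "mF ?c \<in> extensional (gF Z)" unfolding cF by simp
    show "mI ?c \<in> extensional (gF X - mF ?c ` gF Z)" unfolding Dc unfolding cI D_def by simp
    show "mV ?c ` gV X = gV Z" unfolding cV using P(6) Q(6) by (auto simp: image_image[symmetric])
    show "mF ?c ` gF Z \<subseteq> gF X" unfolding img using P(7) Q(7) by blast
    have "inj_on (\<lambda>f. mF \<phi> (mF \<psi> f)) (gF Z)"
      using comp_inj_on[OF Q(8) inj_on_subset[OF P(8) Q(7)]] by (simp add: o_def)
    then show "inj_on (mF ?c) (gF Z)" unfolding cF by (simp add: inj_on_def)
    show "mI ?c f \<in> gF X - mF ?c ` gF Z" if f: "f \<in> gF X - mF ?c ` gF Z" for f
    proof -
      have fD: "f \<in> D" using f Dc by simp
      from Dcases[OF fD] show ?thesis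
      proof (elim disjE)
        assume "f \<in> gF X - mF \<phi> ` gF Y"
        then have "mI \<phi> f \<in> D" using P(9) sub by blast
        then have "mI ?c f \<in> D" using I1 \<open>f \<in> gF X - mF \<phi> ` gF Y\<close> by simp
        then show ?thesis using Dc by simp
      next
        assume "\<exists>g\<in>gF Y - mF \<psi> ` gF Z. f = mF \<phi> g"
        then obtain g where g: "g \<in> gF Y - mF \<psi> ` gF Z" "f = mF \<phi> g" by blast
        then have "mI ?c f \<in> D" using I2 Q(9) Dimg by simp
        then show ?thesis using Dc by simp
      qed
    qed
    show "mI ?c (mI ?c f) = f" if f: "f \<in> gF X - mF ?c ` gF Z" for f
    proof -
      have fD: "f \<in> D" using f Dc by simp
      from Dcases[OF fD] show ?thesis
      proof (elim disjE)
        assume "f \<in> gF X - mF \<phi> ` gF Y"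
        then show ?thesis using I1 P(9,10) by auto
      next
        assume "\<exists>g\<in>gF Y - mF \<psi> ` gF Z. f = mF \<phi> g"
        then obtain g where g: "g \<in> gF Y - mF \<psi> ` gF Z" "f = mF \<phi> g" by blast
        then show ?thesis using I2 Q(9,10) by auto
      qed
    qed
    show "mI ?c f \<noteq> f" if f: "f \<in> gF X - mF ?c ` gF Z" for f
    proof -
      have fD: "f \<in> D" using f Dc by simp
      from Dcases[OF fD] show ?thesis
      proof (elim disjE)
        assume "f \<in> gF X - mF \<phi> ` gF Y"
        then show ?thesis using I1 P(11) by auto
      next
        assume "\<exists>g\<in>gF Y - mF \<psi> ` gF Z. f = mF \<phi> g"
        then obtain g where g: "g \<in> gF Y - mF \<psi> ` gF Z" "f = mF \<phi> g" by blast
        moreover have "mI \<psi> g \<in> gF Y" using Q(9) g by blast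
        ultimately show ?thesis using I2 Q(11) P(8) by (auto simp: inj_on_def)
      qed
    qed
    show "mV ?c (gbd X (mF ?c f')) = gbd Z f'" if f': "f' \<in> gF Z" for f'
    proof -
      have "mF \<psi> f' \<in> gF Y" using f' Q(7) by blast
      moreover then have "mF \<phi> (mF \<psi> f') \<in> gF X" using P(7) by blast
      ultimately show ?thesis using f' bdX P(12) Q(12) unfolding cV cF by auto
    qed
    show "mV ?c (gbd X f) = mV ?c (gbd X (mI ?c f))" if f: "f \<in> gF X - mF ?c ` gF Z" for f
    proof -
      have fX: "f \<in> gF X" using f by blast
      have fD: "f \<in> D" using f Dc by simp
      from Dcases[OF fD] show ?thesis
      proof (elim disjE)
        assume h: "f \<in> gF X - mF \<phi> ` gF Y"
        then have "mI \<phi> f \<in> gF X" using P(9) by blast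
        then show ?thesis using h I1 P(13) fX bdX unfolding cV by auto
      next
        assume "\<exists>g\<in>gF Y - mF \<psi> ` gF Z. f = mF \<phi> g"
        then obtain g where g: "g \<in> gF Y - mF \<psi> ` gF Z" "f = mF \<phi> g" by blast
        moreover have "mI \<psi> g \<in> gF Y" using Q(9) g by blast
        moreover then have "mF \<phi> (mI \<psi> g) \<in> gF X" using P(7) by blast
        ultimately show ?thesis using I2 Q(13) P(12) fX bdX unfolding cV by auto
      qed
    qed
  qed
  have R1: "Rel X Y \<phi> \<subseteq> Rel X Z ?c"
  proof
    fix p assume "p \<in> Rel X Y \<phi>"
    then obtain f where f: "p = (gbd X f, gbd X (mI \<phi> f))" "f \<in> gF X - mF \<phi> ` gF Y"
      unfolding Rel_def by blast
    then show "p \<in> Rel X Z ?c" unfolding Rel_def Dc using sub I1 by force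
  qed
  have R2: "\<And>g. g \<in> gF Y - mF \<psi> ` gF Z \<Longrightarrow>
       (gbd X (mF \<phi> g), gbd X (mF \<phi> (mI \<psi> g))) \<in> Rel X Z ?c"
    unfolding Rel_def Dc using Dimg I2 by force
  have R1s: "(Rel X Y \<phi>)\<^sup>* \<subseteq> (Rel X Z ?c)\<^sup>*" using R1 by (rule rtrancl_mono)
  have claim: "\<forall>v\<in>gV X. \<forall>w\<in>gV X. mV \<phi> v = a \<longrightarrow> mV \<phi> w = b \<longrightarrow> (v, w) \<in> (Rel X Z ?c)\<^sup>*"
    if ab: "(a, b) \<in> (Rel Y Z \<psi>)\<^sup>*" for a b
    using ab
  proof (induction rule: rtrancl_induct)
    case base
    then show ?case using fibp R1s by blast
  next
    case (step b c)
    show ?case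
    proof (intro ballI impI)
      fix v w assume v: "v \<in> gV X" and w: "w \<in> gV X" and va: "mV \<phi> v = a" and wc: "mV \<phi> w = c"
      from step(2) obtain g where g: "b = gbd Y g" "c = gbd Y (mI \<psi> g)" "g \<in> gF Y - mF \<psi> ` gF Z"
        unfolding Rel_def by blast
      have g1: "mF \<phi> g \<in> gF X" using g(3) P(7) by blast
      have g2: "mI \<psi> g \<in> gF Y" using g(3) Q(9) by blast
      have g3: "mF \<phi> (mI \<psi> g) \<in> gF X" using g2 P(7) by blast
      let ?x = "gbd X (mF \<phi> g)" and ?y = "gbd X (mF \<phi> (mI \<psi> g))"
      have "mV \<phi> ?x = b" using P(12) g by auto
      then have 1: "(v, ?x) \<in> (Rel X Z ?c)\<^sup>*" using step(3) v bdX g1 va by blast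
      have 2: "(?x, ?y) \<in> (Rel X Z ?c)\<^sup>*" using R2 g(3) by blast
      have "mV \<phi> ?y = mV \<phi> w" using P(12) g g2 wc by auto
      then have 3: "(?y, w) \<in> (Rel X Z ?c)\<^sup>*" using fibp bdX g3 w R1s by blast
      show "(v, w) \<in> (Rel X Z ?c)\<^sup>*" using 1 2 3 by (meson rtrancl_trans)
    qed
  qed
  have "\<forall>v\<in>gV X. \<forall>w\<in>gV X. mV ?c v = mV ?c w \<longrightarrow> (v, w) \<in> (Rel X Z ?c)\<^sup>*"
  proof (intro ballI impI)
    fix v w assume v: "v \<in> gV X" and w: "w \<in> gV X" and e: "mV ?c v = mV ?c w"
    have "mV \<phi> v \<in> gV Y" "mV \<phi> w \<in> gV Y" using v w P(6) by auto
    moreover have "mV \<psi> (mV \<phi> v) = mV \<psi> (mV \<phi> w)" using e v w unfolding cV by simp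
    ultimately have "(mV \<phi> v, mV \<phi> w) \<in> (Rel Y Z \<psi>)\<^sup>*" using fibq by blast
    then show "(v, w) \<in> (Rel X Z ?c)\<^sup>*" using claim v w by blast
  qed
  then show ?thesis using aX aZ mc by (simp add: good_def)
qed

lemma ctd_good: "ctd_mor X Y \<phi> \<Longrightarrow> good X Y \<phi>"
  by (induction rule: ctd_mor.induct) (auto intro: good_iso good_contr good_comp)



lemma iso_selfD:
  assumes "is_iso_mor G G \<alpha>"
  shows "is_graph G" "mV \<alpha> \<in> extensional (gV G)" "mF \<alpha> \<in> extensional (gF G)"
    "bij_betw (mV \<alpha>) (gV G) (gV G)" "bij_betw (mF \<alpha>) (gF G) (gF G)"
    "\<And>f'. f' \<in> gF G \<Longrightarrow> mV \<alpha> (gbd G (mF \<alpha> f')) = gbd G f'"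
    "\<And>f'. f' \<in> gF G \<Longrightarrow> ginv G (mF \<alpha> f') \<noteq> mF \<alpha> f' \<Longrightarrow> ginv G (mF \<alpha> f') = mF \<alpha> (ginv G f')"
  using assms unfolding is_iso_mor_def is_mor_def by blast+

lemma iso_selfI:
  assumes "is_graph G" "mV \<alpha> \<in> extensional (gV G)" "mF \<alpha> \<in> extensional (gF G)"
    "mI \<alpha> = (\<lambda>_. undefined)"
    "bij_betw (mV \<alpha>) (gV G) (gV G)" "bij_betw (mF \<alpha>) (gF G) (gF G)"
    "\<And>f'. f' \<in> gF G \<Longrightarrow> mV \<alpha> (gbd G (mF \<alpha> f')) = gbd G f'"
    "\<And>f'. f' \<in> gF G \<Longrightarrow> ginv G (mF \<alpha> f') \<noteq> mF \<alpha> f' \<Longrightarrow> ginv G (mF \<alpha> f') = mF \<alpha> (ginv G f')"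
  shows "is_iso_mor G G \<alpha>"
proof -
  have e: "gF G - mF \<alpha> ` gF G = {}" using assms(6) by (simp add: bij_betw_def)
  have "is_mor G G \<alpha>" unfolding is_mor_def e
    apply (intro conjI)
    using assms by (simp_all add: bij_betw_def)
  then show ?thesis using assms(5,6) by (simp add: is_iso_mor_def)
qed

lemma iso_self_mI:
  assumes "is_iso_mor G G \<alpha>" shows "mI \<alpha> = (\<lambda>_. undefined)"
proof -
  have e: "gF G - mF \<alpha> ` gF G = {}" using assms by (simp add: is_iso_mor_def bij_betw_def)
  have "mI \<alpha> \<in> extensional {}" using is_morD(5)[of G G \<alpha>] assms e by (simp add: is_iso_mor_def)
  then show ?thesis by (auto simp: extensional_def)
qed

lemma iso_self_surj_iff:
  assumes "is_iso_mor G G \<alpha>" shows "mF \<alpha> ` gF G = gF G" "mV \<alpha> ` gV G = gV G"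
  using iso_selfD(4,5)[OF assms] by (simp_all add: bij_betw_def)

context
  fixes X Y :: "('f, 'v) gph" and \<phi> :: "('f, 'v) gmor"
  assumes good: "good X Y \<phi>"
begin

abbreviation "FI \<equiv> mF \<phi> ` gF Y"
abbreviation "CC \<equiv> gF X - mF \<phi> ` gF Y"

lemma aX: "is_aggregate X" and aY: "is_aggregate Y" and mp: "is_mor X Y \<phi>"
  and fibp: "\<And>v w. v \<in> gV X \<Longrightarrow> w \<in> gV X \<Longrightarrow> mV \<phi> v = mV \<phi> w \<Longrightarrow> (v, w) \<in> (Rel X Y \<phi>)\<^sup>*"
  using good by (auto simp: good_def)

lemmas P = is_morD[OF mp]

lemma phiV_in: "v \<in> gV X \<Longrightarrow> mV \<phi> v \<in> gV Y"
  using P(6) by (metis imageI)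

lemma phiV_ex: "y \<in> gV Y \<Longrightarrow> \<exists>v\<in>gV X. y = mV \<phi> v"
proof -
  assume "y \<in> gV Y"
  then have "y \<in> mV \<phi> ` gV X" using P(6) by simp
  then show ?thesis by (rule imageE) blast
qed

lemma gX: "is_graph X" and gY: "is_graph Y" using aX aY by (simp_all add: is_aggregate_def)

lemma invX: "\<And>f. f \<in> gF X \<Longrightarrow> ginv X f = f" using aX by (simp add: is_aggregate_def)
lemma invY: "\<And>f. f \<in> gF Y \<Longrightarrow> ginv Y f = f" using aY by (simp add: is_aggregate_def)

lemma ghost_graph: "is_graph (ghost X Y \<phi>)"
  using gX P(9,10) unfolding is_graph_def ghost_def by auto

lemma finX: "finite (gF X)" "finite (gV X)" using gX by (simp_all add: is_graph_def)
lemma finY: "finite (gF Y)" "finite (gV Y)" using gY by (simp_all add: is_graph_def)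

lemma from_ghost:
  assumes a: "is_iso_mor (ghost X Y \<phi>) (ghost X Y \<phi>) \<alpha>"
  shows "is_iso_mor X X \<alpha>" "mF \<alpha> ` FI = FI" "\<And>f. f \<in> CC \<Longrightarrow> mI \<phi> (mF \<alpha> f) = mF \<alpha> (mI \<phi> f)"
proof -
  note A = iso_selfD[OF a]
  have gg: "gF (ghost X Y \<phi>) = gF X" "gV (ghost X Y \<phi>) = gV X" "gbd (ghost X Y \<phi>) = gbd X"
    by (simp_all add: ghost_def)
  have gi: "\<And>f. ginv (ghost X Y \<phi>) f = (if f \<in> FI then f else mI \<phi> f)" by (simp add: ghost_def)
  have inX: "\<And>f. f \<in> gF X \<Longrightarrow> mF \<alpha> f \<in> gF X" using A(5) gg by (auto simp: bij_betw_def)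
  show "is_iso_mor X X \<alpha>"
    apply (rule iso_selfI)
    using gX A gg iso_self_mI[OF a] invX inX by auto
  have bF: "bij_betw (mF \<alpha>) (gF X) (gF X)" using A(5) gg by simp
  have bk: "f \<in> CC" if f: "f \<in> gF X" and hh: "mF \<alpha> f \<in> CC" for f
  proof (rule ccontr)
    assume "f \<notin> CC"
    then have fI: "f \<in> FI" using f by blast
    have "ginv (ghost X Y \<phi>) (mF \<alpha> f) \<noteq> mF \<alpha> f" using hh P(11) gi by auto
    then have "ginv (ghost X Y \<phi>) (mF \<alpha> f) = mF \<alpha> (ginv (ghost X Y \<phi>) f)" using A(7) f gg by auto
    then show False using fI gi hh P(11) by auto
  qed
  have CsubImg: "CC \<subseteq> mF \<alpha> ` CC"
  proof
    fix c assume c: "c \<in> CC"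
    then obtain f where f: "f \<in> gF X" "c = mF \<alpha> f" using bF by (auto simp: bij_betw_def)
    then show "c \<in> mF \<alpha> ` CC" using bk c by blast
  qed
  have injF: "inj_on (mF \<alpha>) (gF X)" using bF by (simp add: bij_betw_def)
  have "card (mF \<alpha> ` CC) = card CC" using injF by (meson Diff_subset card_image inj_on_subset)
  then have imC: "mF \<alpha> ` CC = CC" using CsubImg finX
    by (metis card_subset_eq finite_Diff finite_imageI)
  have FIX: "FI \<subseteq> gF X" using P(7) .
  have "mF \<alpha> ` FI = mF \<alpha> ` (gF X - CC)" using FIX by (simp add: Diff_Diff_Int inf.absorb2)
  also have "\<dots> = mF \<alpha> ` gF X - mF \<alpha> ` CC" using injF by (simp add: inj_on_image_set_diff)
  also have "\<dots> = FI" using imC bF FIX by (auto simp: bij_betw_def)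
  finally show "mF \<alpha> ` FI = FI" .
  show "mI \<phi> (mF \<alpha> f) = mF \<alpha> (mI \<phi> f)" if f: "f \<in> CC" for f
  proof -
    have afC: "mF \<alpha> f \<in> CC" using imC f by blast
    then have "ginv (ghost X Y \<phi>) (mF \<alpha> f) \<noteq> mF \<alpha> f" using P(11) gi by auto
    then have "ginv (ghost X Y \<phi>) (mF \<alpha> f) = mF \<alpha> (ginv (ghost X Y \<phi>) f)" using A(7) f gg by auto
    then show ?thesis using afC f gi by auto
  qed
qed

lemma to_ghost:
  assumes a: "is_iso_mor X X \<alpha>" and pres: "mF \<alpha> ` FI = FI"
    and com: "\<And>f. f \<in> CC \<Longrightarrow> mI \<phi> (mF \<alpha> f) = mF \<alpha> (mI \<phi> f)"
  shows "is_iso_mor (ghost X Y \<phi>) (ghost X Y \<phi>) \<alpha>"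
proof -
  note A = iso_selfD[OF a]
  have gg: "gF (ghost X Y \<phi>) = gF X" "gV (ghost X Y \<phi>) = gV X" "gbd (ghost X Y \<phi>) = gbd X"
    by (simp_all add: ghost_def)
  have gi: "\<And>f. ginv (ghost X Y \<phi>) f = (if f \<in> FI then f else mI \<phi> f)" by (simp add: ghost_def)
  have injF: "inj_on (mF \<alpha>) (gF X)" using A(5) by (simp add: bij_betw_def)
  have FIX: "FI \<subseteq> gF X" using P(7) .
  have last: "ginv (ghost X Y \<phi>) (mF \<alpha> f') = mF \<alpha> (ginv (ghost X Y \<phi>) f')"
    if f': "f' \<in> gF X" "ginv (ghost X Y \<phi>) (mF \<alpha> f') \<noteq> mF \<alpha> f'" for f'
  proof -
    have nI: "mF \<alpha> f' \<notin> FI" using f' gi by auto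
    have "f' \<notin> FI" using nI pres by blast
    then show ?thesis using nI com f' gi by auto
  qed
  show ?thesis
    apply (rule iso_selfI)
    using ghost_graph A gg iso_self_mI[OF a] last by auto
qed


lemma imC_lemma:
  assumes a: "is_iso_mor X X \<alpha>" and pres: "mF \<alpha> ` FI = FI"
  shows "mF \<alpha> ` CC = CC"
proof -
  note A = iso_selfD[OF a]
  have injF: "inj_on (mF \<alpha>) (gF X)" using A(5) by (simp add: bij_betw_def)
  have "mF \<alpha> ` CC = mF \<alpha> ` gF X - mF \<alpha> ` FI"
    using injF P(7) by (simp add: inj_on_image_set_diff)
  then show ?thesis using pres A(5) by (simp add: bij_betw_def)
qed

lemma arrow_to_ghost:
  assumes b: "is_iso_mor Y Y \<beta>" and a: "is_iso_mor X X \<alpha>"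
    and eq: "mor_comp X Y Y \<beta> \<phi> = mor_comp X X Y \<phi> \<alpha>"
  shows "is_iso_mor (ghost X Y \<phi>) (ghost X Y \<phi>) \<alpha>"
proof -
  note A = iso_selfD[OF a] and B = iso_selfD[OF b]
  have injF: "inj_on (mF \<alpha>) (gF X)" using A(5) by (simp add: bij_betw_def)
  have Feq: "mF \<phi> (mF \<beta> f) = mF \<alpha> (mF \<phi> f)" if f: "f \<in> gF Y" for f
  proof -
    have "mF (mor_comp X Y Y \<beta> \<phi>) f = mF (mor_comp X X Y \<phi> \<alpha>) f" by (simp only: eq)
    then show ?thesis using f by (simp add: mor_comp_def)
  qed
  have bY: "mF \<beta> ` gF Y = gF Y" using iso_self_surj_iff(1)[OF b] .
  have sub: "mF \<alpha> ` FI \<subseteq> FI"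
  proof
    fix x assume "x \<in> mF \<alpha> ` FI"
    then obtain f where f: "f \<in> gF Y" "x = mF \<alpha> (mF \<phi> f)" by blast
    then have "x = mF \<phi> (mF \<beta> f)" using Feq by simp
    then show "x \<in> FI" using f bY by blast
  qed
  have "card (mF \<alpha> ` FI) = card FI" using injF P(7) by (meson card_image inj_on_subset)
  then have pres: "mF \<alpha> ` FI = FI" using sub finY
    by (metis card_subset_eq finite_imageI)
  have imC: "mF \<alpha> ` CC = CC" using imC_lemma[OF a pres] .
  have com: "mI \<phi> (mF \<alpha> f) = mF \<alpha> (mI \<phi> f)" if f: "f \<in> CC" for f
  proof -
    have x: "mF \<alpha> f \<in> CC" using f imC by blast
    have fX: "f \<in> gF X" using f by blast
    have ti: "the_inv_into (gF X) (mF \<alpha>) (mF \<alpha> f) = f" using the_inv_into_f_f[OF injF fX] .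
    have "mI (mor_comp X Y Y \<beta> \<phi>) (mF \<alpha> f) = mI (mor_comp X X Y \<phi> \<alpha>) (mF \<alpha> f)" by (simp only: eq)
    moreover have "mI (mor_comp X Y Y \<beta> \<phi>) (mF \<alpha> f) = mI \<phi> (mF \<alpha> f)"
      using x bY by (simp add: mor_comp_def)
    moreover have "mI (mor_comp X X Y \<phi> \<alpha>) (mF \<alpha> f) = mF \<alpha> (mI \<phi> f)"
      using x pres ti fX by (simp add: mor_comp_def)
    ultimately show ?thesis by simp
  qed
  show ?thesis using to_ghost[OF a pres com] .
qed

lemma arrow_unique:
  assumes b: "is_iso_mor Y Y \<beta>" and b': "is_iso_mor Y Y \<beta>'" and a: "is_iso_mor X X \<alpha>"
    and eq: "mor_comp X Y Y \<beta> \<phi> = mor_comp X X Y \<phi> \<alpha>"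
    and eq': "mor_comp X Y Y \<beta>' \<phi> = mor_comp X X Y \<phi> \<alpha>"
  shows "\<beta> = \<beta>'"
proof (rule gmor.equality)
  note B = iso_selfD[OF b] and B' = iso_selfD[OF b']
  have Veq: "mV \<beta> (mV \<phi> v) = mV \<beta>' (mV \<phi> v)" if v: "v \<in> gV X" for v
  proof -
    have "mV (mor_comp X Y Y \<beta> \<phi>) v = mV (mor_comp X Y Y \<beta>' \<phi>) v" by (simp only: eq eq')
    then show ?thesis using v by (simp add: mor_comp_def)
  qed
  show "mV \<beta> = mV \<beta>'"
  proof
    fix y show "mV \<beta> y = mV \<beta>' y"
    proof (cases "y \<in> gV Y")
      case True
      then obtain v where "v \<in> gV X" "y = mV \<phi> v" using P(6) by blast
      then show ?thesis using Veq by simp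
    next
      case False
      then show ?thesis using B(2) B'(2) by (simp add: extensional_def)
    qed
  qed
  have Feq: "mF \<phi> (mF \<beta> f) = mF \<phi> (mF \<beta>' f)" if f: "f \<in> gF Y" for f
  proof -
    have "mF (mor_comp X Y Y \<beta> \<phi>) f = mF (mor_comp X Y Y \<beta>' \<phi>) f" by (simp only: eq eq')
    then show ?thesis using f by (simp add: mor_comp_def)
  qed
  show "mF \<beta> = mF \<beta>'"
  proof
    fix f show "mF \<beta> f = mF \<beta>' f"
    proof (cases "f \<in> gF Y")
      case True
      have "mF \<beta> f \<in> gF Y" "mF \<beta>' f \<in> gF Y" using B(5) B'(5) True by (auto simp: bij_betw_def)
      then show ?thesis using Feq[OF True] P(8) by (simp add: inj_on_def)
    next
      case False
      then show ?thesis using B(3) B'(3) by (simp add: extensional_def)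
    qed
  qed
  show "mI \<beta> = mI \<beta>'" using iso_self_mI[OF b] iso_self_mI[OF b'] by simp
  show "gmor.more \<beta> = gmor.more \<beta>'" by simp
qed


lemma ghost_to_arrow:
  assumes g: "is_iso_mor (ghost X Y \<phi>) (ghost X Y \<phi>) \<alpha>"
  shows "\<exists>\<beta>. is_iso_mor Y Y \<beta> \<and> mor_comp X Y Y \<beta> \<phi> = mor_comp X X Y \<phi> \<alpha>"
proof -
  have a: "is_iso_mor X X \<alpha>" and pres: "mF \<alpha> ` FI = FI"
    and com: "\<And>f. f \<in> CC \<Longrightarrow> mI \<phi> (mF \<alpha> f) = mF \<alpha> (mI \<phi> f)"
    using from_ghost[OF g] by auto
  note A = iso_selfD[OF a]
  have injF: "inj_on (mF \<alpha>) (gF X)" using A(5) by (simp add: bij_betw_def)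
  have imC: "mF \<alpha> ` CC = CC" using imC_lemma[OF a pres] .
  have aVX: "\<And>v. v \<in> gV X \<Longrightarrow> mV \<alpha> v \<in> gV X" using A(4) by (auto simp: bij_betw_def)
  have aFX: "\<And>f. f \<in> gF X \<Longrightarrow> mF \<alpha> f \<in> gF X" using A(5) by (auto simp: bij_betw_def)
  have bdX: "\<And>f. f \<in> gF X \<Longrightarrow> gbd X f \<in> gV X" using gX by (simp add: is_graph_def)
  define sel where "sel y = (SOME v. v \<in> gV X \<and> mV \<phi> v = y)" for y
  have sel: "sel y \<in> gV X \<and> mV \<phi> (sel y) = y" if y: "y \<in> gV Y" for y
  proof -
    have "y \<in> mV \<phi> ` gV X" using y P(6) by simp
    then obtain v0 where "v0 \<in> gV X" "y = mV \<phi> v0" by (rule imageE)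
    then have "\<exists>v. v \<in> gV X \<and> mV \<phi> v = y" by blast
    from someI_ex[where P="\<lambda>v. v \<in> gV X \<and> mV \<phi> v = y", OF this] show ?thesis unfolding sel_def .
  qed
  define \<beta> where "\<beta> = \<lparr> mV = restrict (\<lambda>y. mV \<phi> (mV \<alpha> (sel y))) (gV Y),
     mF = restrict (\<lambda>f. the_inv_into (gF Y) (mF \<phi>) (mF \<alpha> (mF \<phi> f))) (gF Y),
     mI = (\<lambda>_. undefined) \<rparr>"
  have fib: "mV \<phi> (mV \<alpha> a') = mV \<phi> (mV \<alpha> b')" if ab: "(a', b') \<in> (Rel X Y \<phi>)\<^sup>*" for a' b'
    using ab
  proof (induction rule: rtrancl_induct)
    case (step b c)
    from step(2) obtain f where f: "b = gbd X f" "c = gbd X (mI \<phi> f)" "f \<in> CC"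
      unfolding Rel_def by blast
    obtain h where h: "h \<in> CC" "f = mF \<alpha> h" using f(3) imC by (metis imageE)
    have hX: "h \<in> gF X" using h by blast
    have ih: "mI \<phi> h \<in> gF X" using P(9) h by blast
    have "mV \<alpha> b = gbd X h" using f(1) h(2) A(6) hX by simp
    moreover have "mV \<alpha> c = gbd X (mI \<phi> h)" using f(2) h com A(6) ih by simp
    ultimately have "mV \<phi> (mV \<alpha> b) = mV \<phi> (mV \<alpha> c)" using P(13) h(1) by simp
    then show ?case using step(3) by simp
  qed simp
  have Vlem: "mV \<beta> (mV \<phi> v) = mV \<phi> (mV \<alpha> v)" if v: "v \<in> gV X" for v
  proof -
    have y: "mV \<phi> v \<in> gV Y" using v by (rule phiV_in)
    have "(sel (mV \<phi> v), v) \<in> (Rel X Y \<phi>)\<^sup>*" using sel[OF y] fibp v by blast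
    then show ?thesis using fib y unfolding \<beta>_def by simp
  qed
  have Flem: "mF \<beta> f \<in> gF Y \<and> mF \<phi> (mF \<beta> f) = mF \<alpha> (mF \<phi> f)" if f: "f \<in> gF Y" for f
  proof -
    have "mF \<alpha> (mF \<phi> f) \<in> FI" using pres f by blast
    then obtain g where g: "g \<in> gF Y" "mF \<alpha> (mF \<phi> f) = mF \<phi> g" by blast
    have "the_inv_into (gF Y) (mF \<phi>) (mF \<phi> g) = g" using the_inv_into_f_f[OF P(8) g(1)] .
    then show ?thesis using f g unfolding \<beta>_def by simp
  qed
  have VimgY: "mV \<beta> ` gV Y = gV Y"
  proof
    show "mV \<beta> ` gV Y \<subseteq> gV Y"
    proof
      fix z assume "z \<in> mV \<beta> ` gV Y"
      then obtain y where y: "y \<in> gV Y" "z = mV \<beta> y" by blast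
      have "z = mV \<phi> (mV \<alpha> (sel y))" using y unfolding \<beta>_def by simp
      then show "z \<in> gV Y" using sel[OF y(1)] aVX phiV_in by blast
    qed
    show "gV Y \<subseteq> mV \<beta> ` gV Y"
    proof
      fix y assume "y \<in> gV Y"
      then obtain v where v: "v \<in> gV X" "y = mV \<phi> v" using phiV_ex by blast
      obtain u where u: "u \<in> gV X" "v = mV \<alpha> u" using v(1) A(4) by (auto simp: bij_betw_def)
      have "y = mV \<beta> (mV \<phi> u)" using Vlem[OF u(1)] u v by simp
      moreover have "mV \<phi> u \<in> gV Y" using u phiV_in by blast
      ultimately show "y \<in> mV \<beta> ` gV Y" by blast
    qed
  qed
  have bV: "bij_betw (mV \<beta>) (gV Y) (gV Y)"
    using VimgY finY(2) by (simp add: bij_betw_def eq_card_imp_inj_on)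
  have injB: "inj_on (mF \<beta>) (gF Y)"
  proof (rule inj_onI)
    fix f1 f2 assume f: "f1 \<in> gF Y" "f2 \<in> gF Y" "mF \<beta> f1 = mF \<beta> f2"
    then have "mF \<alpha> (mF \<phi> f1) = mF \<alpha> (mF \<phi> f2)" using Flem by metis
    moreover have "mF \<phi> f1 \<in> gF X" "mF \<phi> f2 \<in> gF X" using f P(7) by auto
    ultimately have "mF \<phi> f1 = mF \<phi> f2" using injF by (simp add: inj_on_def)
    then show "f1 = f2" using f P(8) by (simp add: inj_on_def)
  qed
  have subB: "mF \<beta> ` gF Y \<subseteq> gF Y" using Flem by blast
  have "card (mF \<beta> ` gF Y) = card (gF Y)" using injB by (simp add: card_image)
  then have imgB: "mF \<beta> ` gF Y = gF Y" using subB finY(1) by (metis card_subset_eq)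
  have bF: "bij_betw (mF \<beta>) (gF Y) (gF Y)" using injB imgB by (simp add: bij_betw_def)
  have bdB: "mV \<beta> (gbd Y (mF \<beta> f')) = gbd Y f'" if f': "f' \<in> gF Y" for f'
  proof -
    have g: "mF \<beta> f' \<in> gF Y" "mF \<phi> (mF \<beta> f') = mF \<alpha> (mF \<phi> f')" using Flem[OF f'] by auto
    have fX: "mF \<phi> f' \<in> gF X" using f' P(7) by blast
    have gX': "mF \<phi> (mF \<beta> f') \<in> gF X" using g(1) P(7) by blast
    have "gbd Y (mF \<beta> f') = mV \<phi> (gbd X (mF \<phi> (mF \<beta> f')))" using P(12)[OF g(1)] by simp
    then have "mV \<beta> (gbd Y (mF \<beta> f')) = mV \<phi> (mV \<alpha> (gbd X (mF \<phi> (mF \<beta> f'))))"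
      using Vlem bdX gX' by simp
    also have "\<dots> = mV \<phi> (gbd X (mF \<phi> f'))" using g(2) A(6)[OF fX] by simp
    also have "\<dots> = gbd Y f'" using P(12)[OF f'] .
    finally show ?thesis .
  qed
  have isoB: "is_iso_mor Y Y \<beta>"
  proof (rule iso_selfI[OF gY])
    show "mV \<beta> \<in> extensional (gV Y)" unfolding \<beta>_def by simp
    show "mF \<beta> \<in> extensional (gF Y)" unfolding \<beta>_def by simp
    show "mI \<beta> = (\<lambda>_. undefined)" unfolding \<beta>_def by simp
    show "bij_betw (mV \<beta>) (gV Y) (gV Y)" by (rule bV)
    show "bij_betw (mF \<beta>) (gF Y) (gF Y)" by (rule bF)
    show "\<And>f'. f' \<in> gF Y \<Longrightarrow> mV \<beta> (gbd Y (mF \<beta> f')) = gbd Y f'" by (rule bdB)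
    show "\<And>f'. f' \<in> gF Y \<Longrightarrow> ginv Y (mF \<beta> f') \<noteq> mF \<beta> f' \<Longrightarrow> ginv Y (mF \<beta> f') = mF \<beta> (ginv Y f')"
      using invY subB by blast
  qed
  have eq: "mor_comp X Y Y \<beta> \<phi> = mor_comp X X Y \<phi> \<alpha>"
  proof (rule gmor.equality)
    show "mV (mor_comp X Y Y \<beta> \<phi>) = mV (mor_comp X X Y \<phi> \<alpha>)"
      by (simp add: mor_comp_def) (rule restrict_ext, simp add: Vlem)
    show "mF (mor_comp X Y Y \<beta> \<phi>) = mF (mor_comp X X Y \<phi> \<alpha>)"
      by (simp add: mor_comp_def) (rule restrict_ext, simp add: Flem)
    have aX': "mF \<alpha> ` gF X = gF X" using iso_self_surj_iff(1)[OF a] .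
    have "mI (mor_comp X Y Y \<beta> \<phi>) x = mI (mor_comp X X Y \<phi> \<alpha>) x" for x
    proof (cases "x \<in> CC")
      case True
      then obtain h where h: "h \<in> CC" "x = mF \<alpha> h" using imC by (metis imageE)
      have hX: "h \<in> gF X" using h by blast
      have ti: "the_inv_into (gF X) (mF \<alpha>) x = h" using the_inv_into_f_f[OF injF hX] h by simp
      have "mI (mor_comp X Y Y \<beta> \<phi>) x = mI \<phi> x" using True imgB by (simp add: mor_comp_def)
      moreover have "mI (mor_comp X X Y \<phi> \<alpha>) x = mF \<alpha> (mI \<phi> h)"
        using True pres ti aX' by (simp add: mor_comp_def)
      ultimately show ?thesis using com h by simp
    next
      case False
      then show ?thesis using imgB pres by (auto simp: mor_comp_def)
    qed
    then show "mI (mor_comp X Y Y \<beta> \<phi>) = mI (mor_comp X X Y \<phi> \<alpha>)" ..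
    show "gmor.more (mor_comp X Y Y \<beta> \<phi>) = gmor.more (mor_comp X X Y \<phi> \<alpha>)" by simp
  qed
  show ?thesis using isoB eq by blast
qed

end



lemma mor_comp_ghost: "mor_comp (ghost X Y \<phi>) (ghost X Y \<phi>) (ghost X Y \<phi>) a b = mor_comp X X X a b"
proof -
  have gg: "gF (ghost X Y \<phi>) = gF X" "gV (ghost X Y \<phi>) = gV X" by (simp_all add: ghost_def)
  show ?thesis unfolding mor_comp_def gg ..
qed

theorem corollary2p14:
  fixes X Y :: "('f, 'v) gph" and \<phi> :: "('f, 'v) gmor"
  assumes "ctd_mor X Y \<phi>"
  shows "arrow_aut_group X Y \<phi> \<cong> aut_group (ghost X Y \<phi>)"
proof -
  have gd: "good X Y \<phi>" using ctd_good[OF assms] .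
  let ?A = "arrow_aut_group X Y \<phi>" and ?G = "aut_group (ghost X Y \<phi>)"
  have cA: "x \<in> carrier ?A \<longleftrightarrow> is_iso_mor X X (fst x) \<and> is_iso_mor Y Y (snd x) \<and>
      mor_comp X Y Y (snd x) \<phi> = mor_comp X X Y \<phi> (fst x)" for x
    by (cases x) (simp add: arrow_aut_group_def)
  have cG: "a \<in> carrier ?G \<longleftrightarrow> is_iso_mor (ghost X Y \<phi>) (ghost X Y \<phi>) a" for a
    by (simp add: aut_group_def)
  have into: "fst x \<in> carrier ?G" if x: "x \<in> carrier ?A" for x
    using arrow_to_ghost[OF gd] x unfolding cA cG by blast
  have "fst \<in> iso ?A ?G"
    unfolding iso_def
  proof (intro CollectI conjI)
    show "fst \<in> hom ?A ?G"
    proof (rule homI)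
      show "fst x \<in> carrier ?G" if "x \<in> carrier ?A" for x using into that .
      show "fst (x \<otimes>\<^bsub>?A\<^esub> y) = fst x \<otimes>\<^bsub>?G\<^esub> fst y" for x y
        by (cases x, cases y) (simp add: arrow_aut_group_def aut_group_def mor_comp_ghost)
    qed
    show "bij_betw fst (carrier ?A) (carrier ?G)"
      unfolding bij_betw_def
    proof
      show "inj_on fst (carrier ?A)"
      proof (rule inj_onI)
        fix x y assume x: "x \<in> carrier ?A" and y: "y \<in> carrier ?A" and e: "fst x = fst y"
        have "snd x = snd y"
          using arrow_unique[OF gd] x y e unfolding cA by metis
        then show "x = y" using e by (simp add: prod_eq_iff)
      qed
      show "fst ` carrier ?A = carrier ?G"
      proof
        show "fst ` carrier ?A \<subseteq> carrier ?G" using into by blast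
        show "carrier ?G \<subseteq> fst ` carrier ?A"
        proof
          fix a assume "a \<in> carrier ?G"
          then have g: "is_iso_mor (ghost X Y \<phi>) (ghost X Y \<phi>) a" unfolding cG .
          obtain b where b: "is_iso_mor Y Y b" "mor_comp X Y Y b \<phi> = mor_comp X X Y \<phi> a"
            using ghost_to_arrow[OF gd g] by blast
          have "(a, b) \<in> carrier ?A" unfolding cA using b from_ghost(1)[OF gd g] by simp
          then show "a \<in> fst ` carrier ?A" by force
        qed
      qed
    qed
  qed
  then show ?thesis by (rule is_isoI)
qed


end
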